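(* Let $1\le j\le k$ be integers, let $G$ and $H$ be $(j,k)$-bicliques with interesting factors $g(x)$ and $h(x)$, and suppose $g(x)=(-1)^j h(-x+c)$ for some integer $c$. Then $$P_G(c+1)=\binom{c+1}{k}(-1)^{j+k}P_H(-1).$$ In particular, if $G$ and $H$ are complementary $(j,k)$-bicliques, then the number of proper $(j+k)$-colourings of $G$ equals $\binom{j+k}{k}$ times the number of acyclic orientations of $H$.
   Context: All graphs are finite and simple. For integers $1\le j\le k$, a $(j,k)$-biclique is a graph whose vertex set is the disjoint union of a $j$-clique and a $k$-clique, with an arbitrary set of additional edges (bridging edges) each joining a vertex of the $j$-clique to a vertex of the $k$-clique. Two $(j,k)$-bicliques $G,H$ on the same two cliques are complementary if $H$ is obtained from $G$ by replacing every bridging edge by a non-edge and every non-adjacent pair (one vertex in each clique) by an edge. $P_G(x)$ is the chromatic polynomial; $(x)_n=x(x-1)\cdots(x-n+1)$; the interesting factor of a $(j,k)$-biclique $G$ is $P_G(x)/(x)_k$, a polynomial of degree $j$. An acyclic orientation of a graph is an assignment of a direction to each edge producing no directed cycle. (Stanley's theorem, which may be used: for an $n$-vertex graph $F$, $(-1)^nP_F(-1)$ is the number of acyclic orientations of $F$.) *)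

theory Defs
  imports Main "HOL-Library.FuncSet" "HOL-Computational_Algebra.Polynomial"
begin

definition simple_graph :: "'a set \<Rightarrow> 'a set set \<Rightarrow> bool" where
  "simple_graph V E \<longleftrightarrow> finite V \<and> (\<forall>e\<in>E. e \<subseteq> V \<and> card e = 2)"

definition biclique :: "nat \<Rightarrow> nat \<Rightarrow> 'a set \<Rightarrow> 'a set set \<Rightarrow> 'a set \<Rightarrow> 'a set \<Rightarrow> bool" where
  "biclique j k V E A B \<longleftrightarrow> simple_graph V E \<and> A \<inter> B = {} \<and> V = A \<union> B \<and>
     card A = j \<and> card B = k \<and>
     (\<forall>x\<in>A. \<forall>y\<in>A. x \<noteq> y \<longrightarrow> {x, y} \<in> E) \<and>
     (\<forall>x\<in>B. \<forall>y\<in>B. x \<noteq> y \<longrightarrow> {x, y} \<in> E) \<and>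
     (\<forall>e\<in>E. e \<subseteq> A \<or> e \<subseteq> B \<or> (\<exists>x\<in>A. \<exists>y\<in>B. e = {x, y}))"

definition complementary :: "'a set \<Rightarrow> 'a set \<Rightarrow> 'a set set \<Rightarrow> 'a set set \<Rightarrow> bool" where
  "complementary A B EG EH \<longleftrightarrow> (\<forall>x\<in>A. \<forall>y\<in>B. {x, y} \<in> EH \<longleftrightarrow> {x, y} \<notin> EG)"

definition num_colourings :: "'a set \<Rightarrow> 'a set set \<Rightarrow> nat \<Rightarrow> nat" where
  "num_colourings V E n = card {f \<in> V \<rightarrow>\<^sub>E {..<n}. \<forall>x y. {x, y} \<in> E \<longrightarrow> f x \<noteq> f y}"

definition chrom_poly :: "'a set \<Rightarrow> 'a set set \<Rightarrow> int poly" where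
  "chrom_poly V E = (THE p. \<forall>n::nat. poly p (int n) = int (num_colourings V E n))"

definition falling_poly :: "nat \<Rightarrow> int poly" where
  "falling_poly k = (\<Prod>i<k. [:- int i, 1:])"

definition interesting_factor :: "nat \<Rightarrow> 'a set \<Rightarrow> 'a set set \<Rightarrow> int poly" where
  "interesting_factor k V E = chrom_poly V E div falling_poly k"

definition orientation :: "'a set set \<Rightarrow> ('a \<times> 'a) set \<Rightarrow> bool" where
  "orientation E R \<longleftrightarrow> R \<subseteq> {(x, y). {x, y} \<in> E} \<and>
     (\<forall>x y. {x, y} \<in> E \<longrightarrow> ((x, y) \<in> R \<longleftrightarrow> (y, x) \<notin> R))"

definition num_acyclic_orientations :: "'a set set \<Rightarrow> nat" where
  "num_acyclic_orientations E = card {R. orientation E R \<and> acyclic R}"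

end

theory Submission
  imports Defs
begin

definition ff :: "nat \<Rightarrow> nat \<Rightarrow> nat" where "ff r n = prod ((-) n) {0..<r}"

lemma ff_Suc: "ff (Suc r) n = n * ff r (n - 1)"
  unfolding ff_def by (simp add: prod.atLeast0_lessThan_Suc_shift del: prod.op_ivl_Suc)

definition mt :: "('a \<times> 'b) set \<Rightarrow> ('a \<times> 'b) set set" where
  "mt Y = {M. M \<subseteq> Y \<and> inj_on fst M \<and> inj_on snd M}"

definition Col :: "'a set \<Rightarrow> 'a set \<Rightarrow> ('a \<times> 'a) set \<Rightarrow> 'k set \<Rightarrow> ('a \<Rightarrow> 'k) set" where
  "Col A B Y K = {f \<in> (A \<union> B) \<rightarrow>\<^sub>E K. inj_on f A \<and> inj_on f B \<and> (\<forall>a\<in>A. \<forall>b\<in>B. f a = f b \<longrightarrow> (a,b) \<in> Y)}"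

lemma mt_finite: "finite Y \<Longrightarrow> finite (mt Y)"
  unfolding mt_def by (rule finite_subset[of _ "Pow Y"]) auto

lemma mt_card_le: assumes "M \<in> mt Y" "Y \<subseteq> A \<times> B" "finite A"
  shows "card M \<le> card A"
proof -
  have "card M = card (fst ` M)" using assms by (simp add: mt_def card_image)
  also have "\<dots> \<le> card A" using assms by (intro card_mono) (auto simp: mt_def)
  finally show ?thesis .
qed

lemma mt_card_le2: assumes "M \<in> mt Y" "Y \<subseteq> A \<times> B" "finite B"
  shows "card M \<le> card B"
proof -
  have "card M = card (snd ` M)" using assms by (simp add: mt_def card_image)
  also have "\<dots> \<le> card B" using assms by (intro card_mono) (auto simp: mt_def)
  finally show ?thesis .
qed

lemma mt_split:
  assumes "e \<in> Y"
  shows "mt Y = mt (Y - {e}) \<union> insert e ` mt {p \<in> Y. fst p \<noteq> fst e \<and> snd p \<noteq> snd e}"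
    (is "_ = ?L \<union> ?R")
proof
  show "mt Y \<subseteq> ?L \<union> ?R"
  proof
    fix M assume M: "M \<in> mt Y"
    show "M \<in> ?L \<union> ?R"
    proof (cases "e \<in> M")
      case False thus ?thesis using M by (auto simp: mt_def intro: inj_on_subset)
    next
      case True
      have "M - {e} \<in> mt {p \<in> Y. fst p \<noteq> fst e \<and> snd p \<noteq> snd e}"
        using M True unfolding mt_def inj_on_def by auto
      moreover have "M = insert e (M - {e})" using True by auto
      ultimately show ?thesis by blast
    qed
  qed
next
  show "?L \<union> ?R \<subseteq> mt Y"
    using assms unfolding mt_def inj_on_def by auto
qed

lemma sum_mt_split:
  assumes "e \<in> Y" "finite Y"
  shows "(\<Sum>M\<in>mt Y. F (card M)) = (\<Sum>M\<in>mt (Y - {e}). F (card M))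
     + (\<Sum>M\<in>mt {p \<in> Y. fst p \<noteq> fst e \<and> snd p \<noteq> snd e}. F (Suc (card M)))"
proof -
  let ?Y2 = "{p \<in> Y. fst p \<noteq> fst e \<and> snd p \<noteq> snd e}"
  have f1: "finite (mt (Y - {e}))" "finite (mt ?Y2)" using assms by (auto intro: mt_finite)
  have dis: "mt (Y - {e}) \<inter> insert e ` mt ?Y2 = {}" unfolding mt_def by auto
  have inj: "inj_on (insert e) (mt ?Y2)"
    unfolding mt_def inj_on_def by auto
  have "(\<Sum>M\<in>mt Y. F (card M)) = (\<Sum>M\<in>mt (Y - {e}). F (card M)) + (\<Sum>M\<in>insert e ` mt ?Y2. F (card M))"
    using mt_split[OF assms(1)] f1 dis by (simp add: sum.union_disjoint)
  also have "(\<Sum>M\<in>insert e ` mt ?Y2. F (card M)) = (\<Sum>M\<in>mt ?Y2. F (card (insert e M)))"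
    using inj by (simp add: sum.reindex)
  also have "\<dots> = (\<Sum>M\<in>mt ?Y2. F (Suc (card M)))"
  proof (rule sum.cong[OF refl])
    fix M assume "M \<in> mt ?Y2"
    hence "e \<notin> M" "finite M" using assms by (auto simp: mt_def intro: finite_subset)
    thus "F (card (insert e M)) = F (Suc (card M))" by simp
  qed
  finally show ?thesis .
qed


lemma card_inj_funcset:
  assumes "finite S" "finite K"
  shows "card {f \<in> S \<rightarrow>\<^sub>E K. inj_on f S} = ff (card S) (card K)"
  using card_inj_on_subset_funcset[OF assms(1) assms(2) subset_refl] by (simp add: ff_def)

lemma Col_empty:
  assumes "A \<inter> B = {}"
  shows "Col A B {} K = {f \<in> (A \<union> B) \<rightarrow>\<^sub>E K. inj_on f (A \<union> B)}"
proof -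
  have "inj_on f (A \<union> B) \<longleftrightarrow> inj_on f A \<and> inj_on f B \<and> (\<forall>a\<in>A. \<forall>b\<in>B. f a \<noteq> f b)" for f
    using assms by (auto simp: inj_on_Un)
  thus ?thesis unfolding Col_def by auto
qed

lemma Col_split:
  assumes "(a,b) \<in> Y" "Y \<subseteq> A \<times> B"
  shows "Col A B Y K = Col A B (Y - {(a,b)}) K \<union> (\<Union>c\<in>K. {f \<in> Col A B Y K. f a = c \<and> f b = c})"
proof -
  have aA: "a \<in> A" "b \<in> B" using assms by auto
  show ?thesis
  proof (intro equalityI subsetI)
    fix f assume f: "f \<in> Col A B Y K"
    show "f \<in> Col A B (Y - {(a,b)}) K \<union> (\<Union>c\<in>K. {f \<in> Col A B Y K. f a = c \<and> f b = c})"
    proof (cases "f a = f b")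
      case True
      have "f a \<in> K" using f aA by (auto simp: Col_def PiE_iff)
      moreover have "f \<in> {g \<in> Col A B Y K. g a = f a \<and> g b = f a}" using f True by simp
      ultimately show ?thesis by (intro UnI2 UN_I)
    next
      case False
      hence "f \<in> Col A B (Y - {(a,b)}) K" using f unfolding Col_def by auto
      thus ?thesis by (rule UnI1)
    qed
  next
    fix f assume "f \<in> Col A B (Y - {(a,b)}) K \<union> (\<Union>c\<in>K. {f \<in> Col A B Y K. f a = c \<and> f b = c})"
    thus "f \<in> Col A B Y K" unfolding Col_def by blast
  qed
qed

lemma Col_fiber:
  assumes "(a,b) \<in> Y" "Y \<subseteq> A \<times> B" "A \<inter> B = {}" "c \<in> K"
  shows "card {f \<in> Col A B Y K. f a = c \<and> f b = c}
       = card (Col (A - {a}) (B - {b}) {p \<in> Y. fst p \<noteq> a \<and> snd p \<noteq> b} (K - {c}))"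
proof -
  have aA: "a \<in> A" and bB: "b \<in> B" using assms by auto
  have ab: "a \<notin> B" "b \<notin> A" using assms aA bB by auto
  let ?S = "{f \<in> Col A B Y K. f a = c \<and> f b = c}"
  let ?T = "Col (A - {a}) (B - {b}) {p \<in> Y. fst p \<noteq> a \<and> snd p \<noteq> b} (K - {c})"
  let ?r = "\<lambda>f. restrict f ((A - {a}) \<union> (B - {b}))"
  let ?e = "\<lambda>g. g(a := c, b := c)"
  have "bij_betw ?r ?S ?T"
  proof (rule bij_betw_byWitness[where f' = ?e])
    show "\<forall>f\<in>?S. ?e (?r f) = f"
    proof
      fix f assume f: "f \<in> ?S"
      hence fe: "f \<in> extensional (A \<union> B)" by (auto simp: Col_def PiE_def)
      show "?e (?r f) = f"
      proof
        fix x show "?e (?r f) x = f x"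
          using f fe aA bB by (cases "x \<in> A \<union> B") (auto simp: extensional_def)
      qed
    qed
    show "\<forall>g\<in>?T. ?r (?e g) = g"
    proof
      fix g assume g: "g \<in> ?T"
      hence ge: "g \<in> extensional ((A - {a}) \<union> (B - {b}))" by (auto simp: Col_def PiE_def)
      show "?r (?e g) = g"
      proof
        fix x show "?r (?e g) x = g x"
          using ge ab by (cases "x \<in> (A - {a}) \<union> (B - {b})") (auto simp: extensional_def)
      qed
    qed
    show "?r ` ?S \<subseteq> ?T"
    proof
      fix h assume "h \<in> ?r ` ?S"
      then obtain f where f: "f \<in> ?S" and h: "h = ?r f" by blast
      have fK: "f \<in> (A \<union> B) \<rightarrow>\<^sub>E K" and iA: "inj_on f A" and iB: "inj_on f B"
        and cr: "\<forall>x\<in>A. \<forall>y\<in>B. f x = f y \<longrightarrow> (x,y) \<in> Y" and fa: "f a = c" and fb: "f b = c"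
        using f by (auto simp: Col_def)
      have nA: "f x \<noteq> c" if "x \<in> A - {a}" for x using iA that aA fa by (auto simp: inj_on_def)
      have nB: "f x \<noteq> c" if "x \<in> B - {b}" for x using iB that bB fb by (auto simp: inj_on_def)
      show "h \<in> ?T" unfolding h Col_def
      proof (intro CollectI conjI)
        show "?r f \<in> (A - {a} \<union> (B - {b})) \<rightarrow>\<^sub>E K - {c}"
          using fK nA nB by (auto simp: PiE_iff)
        show "inj_on (?r f) (A - {a})" using iA by (auto simp: inj_on_def)
        show "inj_on (?r f) (B - {b})" using iB by (auto simp: inj_on_def)
        show "\<forall>x\<in>A - {a}. \<forall>y\<in>B - {b}. ?r f x = ?r f y \<longrightarrow> (x, y) \<in> {p \<in> Y. fst p \<noteq> a \<and> snd p \<noteq> b}"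
          using cr by auto
      qed
    qed
    show "?e ` ?T \<subseteq> ?S"
    proof
      fix h assume "h \<in> ?e ` ?T"
      then obtain g where g: "g \<in> ?T" and h: "h = ?e g" by blast
      have gK: "g \<in> (A - {a} \<union> (B - {b})) \<rightarrow>\<^sub>E K - {c}" and iA: "inj_on g (A - {a})"
        and iB: "inj_on g (B - {b})"
        and cr: "\<forall>x\<in>A - {a}. \<forall>y\<in>B - {b}. g x = g y \<longrightarrow> (x,y) \<in> {p \<in> Y. fst p \<noteq> a \<and> snd p \<noteq> b}"
        using g by (auto simp: Col_def)
      have hK: "h \<in> (A \<union> B) \<rightarrow>\<^sub>E K"
        using gK aA bB assms(4) unfolding h by (auto simp: PiE_iff extensional_def)
      have hA: "inj_on h A"
        unfolding inj_on_def
      proof (intro ballI impI)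
        fix x y assume "x \<in> A" "y \<in> A" "h x = h y"
        thus "x = y" using iA gK ab unfolding h by (auto simp: inj_on_def PiE_iff split: if_splits)
      qed
      have hB: "inj_on h B"
        unfolding inj_on_def
      proof (intro ballI impI)
        fix x y assume "x \<in> B" "y \<in> B" "h x = h y"
        thus "x = y" using iB gK ab unfolding h by (auto simp: inj_on_def PiE_iff split: if_splits)
      qed
      have hc: "\<forall>x\<in>A. \<forall>y\<in>B. h x = h y \<longrightarrow> (x,y) \<in> Y"
      proof (intro ballI impI)
        fix x y assume "x \<in> A" "y \<in> B" "h x = h y"
        thus "(x,y) \<in> Y" using cr gK ab assms(1) unfolding h by (auto simp: PiE_iff split: if_splits)
      qed
      show "h \<in> ?S" using hK hA hB hc by (simp add: Col_def h)
    qed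
  qed
  thus ?thesis by (rule bij_betw_same_card)
qed


lemma Col_finite: "finite A \<Longrightarrow> finite B \<Longrightarrow> finite K \<Longrightarrow> finite (Col A B Y K)"
  unfolding Col_def by (rule finite_subset[of _ "(A \<union> B) \<rightarrow>\<^sub>E K"]) (auto intro: finite_PiE)

lemma Col_count:
  assumes "finite A" "finite B" "A \<inter> B = {}" "Y \<subseteq> A \<times> B" "finite K"
  shows "card (Col A B Y K) = (\<Sum>M\<in>mt Y. ff (card A + card B - card M) (card K))"
  using assms
proof (induction "card Y" arbitrary: A B Y K rule: less_induct)
  case less
  show ?case
  proof (cases "Y = {}")
    case True
    have "mt Y = {{}}" using True by (auto simp: mt_def)
    moreover have "card (Col A B Y K) = ff (card (A \<union> B)) (card K)"
      using True less.prems by (simp add: Col_empty card_inj_funcset)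
    ultimately show ?thesis using less.prems by (simp add: card_Un_disjoint)
  next
    case False
    then obtain a b where ab: "(a,b) \<in> Y" by auto
    have aA: "a \<in> A" and bB: "b \<in> B" using ab less.prems by auto
    have finY: "finite Y" using less.prems by (auto intro: finite_subset)
    define Y2 where "Y2 = {p \<in> Y. fst p \<noteq> a \<and> snd p \<noteq> b}"
    define n where "n = card K"
    define j where "j = card A"
    define k where "k = card B"
    have j1: "card (A - {a}) = j - 1" and k1: "card (B - {b}) = k - 1"
      using aA bB less.prems by (auto simp: j_def k_def)
    have jpos: "j \<ge> 1" "k \<ge> 1" using aA bB less.prems by (auto simp: j_def k_def Suc_le_eq card_gt_0_iff)
    have Y2sub: "Y2 \<subseteq> (A - {a}) \<times> (B - {b})" using less.prems by (auto simp: Y2_def)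
    have "(a,b) \<notin> Y2" by (simp add: Y2_def)
    hence "Y2 \<subset> Y" using ab unfolding Y2_def by blast
    hence cY2: "card Y2 < card Y" using finY by (rule psubset_card_mono[rotated])
    have cY1: "card (Y - {(a,b)}) < card Y" using ab finY by (rule card_Diff1_less[rotated])
    have IH1: "card (Col A B (Y - {(a,b)}) K) = (\<Sum>M\<in>mt (Y - {(a,b)}). ff (j + k - card M) n)"
      using less.hyps[OF cY1, of A B K] less.prems by (auto simp: j_def k_def n_def)
    have IH2: "card (Col (A - {a}) (B - {b}) Y2 (K - {c})) = (\<Sum>M\<in>mt Y2. ff (j - 1 + (k - 1) - card M) (n - 1))"
      if "c \<in> K" for c
      using less.hyps[OF cY2, of "A - {a}" "B - {b}" "K - {c}"] less.prems Y2sub that j1 k1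
      by (auto simp: n_def)
    let ?S = "\<lambda>c. {f \<in> Col A B Y K. f a = c \<and> f b = c}"
    have finC: "finite (Col A B Z K)" for Z using less.prems by (intro Col_finite) auto
    have dis1: "Col A B (Y - {(a,b)}) K \<inter> (\<Union>c\<in>K. ?S c) = {}"
      using aA bB unfolding Col_def by fastforce
    have "card (Col A B Y K) = card (Col A B (Y - {(a,b)}) K) + card (\<Union>c\<in>K. ?S c)"
      by (subst Col_split[OF ab less.prems(4)], rule card_Un_disjoint)
        (use finC dis1 less.prems in \<open>auto intro: finite_subset[OF _ finC]\<close>)
    also have "card (\<Union>c\<in>K. ?S c) = (\<Sum>c\<in>K. card (?S c))"
      by (rule card_UN_disjoint) (use less.prems finC in \<open>auto intro: finite_subset[OF _ finC]\<close>)
    also have "\<dots> = (\<Sum>c\<in>K. (\<Sum>M\<in>mt Y2. ff (j - 1 + (k - 1) - card M) (n - 1)))"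
    proof (rule sum.cong[OF refl])
      fix c assume c: "c \<in> K"
      show "card (?S c) = (\<Sum>M\<in>mt Y2. ff (j - 1 + (k - 1) - card M) (n - 1))"
        by (simp only: Col_fiber[OF ab less.prems(4) less.prems(3) c] Y2_def[symmetric] IH2[OF c])
    qed
    also have "\<dots> = (\<Sum>M\<in>mt Y2. n * ff (j - 1 + (k - 1) - card M) (n - 1))"
      by (simp add: n_def sum_distrib_left)
    also have "\<dots> = (\<Sum>M\<in>mt Y2. ff (j + k - Suc (card M)) n)"
    proof (rule sum.cong[OF refl])
      fix M assume M: "M \<in> mt Y2"
      have "card M \<le> card (A - {a})" using mt_card_le[OF M Y2sub] less.prems by auto
      hence "j + k - Suc (card M) = Suc (j - 1 + (k - 1) - card M)" using j1 jpos by auto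
      thus "n * ff (j - 1 + (k - 1) - card M) (n - 1) = ff (j + k - Suc (card M)) n"
        by (simp add: ff_Suc)
    qed
    finally show ?thesis
      using IH1 sum_mt_split[OF ab finY, of "\<lambda>m. ff (j + k - m) n"]
      by (simp add: Y2_def j_def k_def n_def)
  qed
qed


lemma edge_ne: "simple_graph V E \<Longrightarrow> {x, y} \<in> E \<Longrightarrow> x \<noteq> y"
  unfolding simple_graph_def by force

lemma edge_in: "simple_graph V E \<Longrightarrow> {x, y} \<in> E \<Longrightarrow> x \<in> V \<and> y \<in> V"
  unfolding simple_graph_def by blast

lemma bicliqueD:
  assumes "biclique j k V E A B"
  shows "simple_graph V E" "A \<inter> B = {}" "V = A \<union> B" "card A = j" "card B = k"
    "\<forall>x\<in>A. \<forall>y\<in>A. x \<noteq> y \<longrightarrow> {x, y} \<in> E"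
    "\<forall>x\<in>B. \<forall>y\<in>B. x \<noteq> y \<longrightarrow> {x, y} \<in> E"
    "\<forall>e\<in>E. e \<subseteq> A \<or> e \<subseteq> B \<or> (\<exists>x\<in>A. \<exists>y\<in>B. e = {x, y})"
  using assms unfolding biclique_def by blast+

lemma bic_col:
  assumes "biclique j k V E A B"
  shows "num_colourings V E n = card (Col A B {p \<in> A \<times> B. {fst p, snd p} \<notin> E} {..<n})"
proof -
  have sg: "simple_graph V E" and dis: "A \<inter> B = {}" and V: "V = A \<union> B"
    and cA: "\<forall>x\<in>A. \<forall>y\<in>A. x \<noteq> y \<longrightarrow> {x, y} \<in> E"
    and cB: "\<forall>x\<in>B. \<forall>y\<in>B. x \<noteq> y \<longrightarrow> {x, y} \<in> E"
    and eE: "\<forall>e\<in>E. e \<subseteq> A \<or> e \<subseteq> B \<or> (\<exists>x\<in>A. \<exists>y\<in>B. e = {x, y})"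
    using bicliqueD[OF assms] by (simp_all only:)
  have "(\<forall>x y. {x, y} \<in> E \<longrightarrow> f x \<noteq> f y) \<longleftrightarrow>
     inj_on f A \<and> inj_on f B \<and> (\<forall>a\<in>A. \<forall>b\<in>B. f a = f b \<longrightarrow> (a,b) \<in> {p \<in> A \<times> B. {fst p, snd p} \<notin> E})"
    for f
  proof
    assume H: "\<forall>x y. {x, y} \<in> E \<longrightarrow> f x \<noteq> f y"
    show "inj_on f A \<and> inj_on f B \<and> (\<forall>a\<in>A. \<forall>b\<in>B. f a = f b \<longrightarrow> (a,b) \<in> {p \<in> A \<times> B. {fst p, snd p} \<notin> E})"
    proof (intro conjI)
      show "inj_on f A"
      proof (rule inj_onI)
        fix x y assume xy: "x \<in> A" "y \<in> A" "f x = f y"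
        show "x = y"
        proof (rule ccontr)
          assume "x \<noteq> y" hence "{x,y} \<in> E" using cA xy by blast
          thus False using H xy by blast
        qed
      qed
      show "inj_on f B"
      proof (rule inj_onI)
        fix x y assume xy: "x \<in> B" "y \<in> B" "f x = f y"
        show "x = y"
        proof (rule ccontr)
          assume "x \<noteq> y" hence "{x,y} \<in> E" using cB xy by blast
          thus False using H xy by blast
        qed
      qed
      show "\<forall>a\<in>A. \<forall>b\<in>B. f a = f b \<longrightarrow> (a,b) \<in> {p \<in> A \<times> B. {fst p, snd p} \<notin> E}"
        using H by auto
    qed
  next
    assume H: "inj_on f A \<and> inj_on f B \<and> (\<forall>a\<in>A. \<forall>b\<in>B. f a = f b \<longrightarrow> (a,b) \<in> {p \<in> A \<times> B. {fst p, snd p} \<notin> E})"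
    show "\<forall>x y. {x, y} \<in> E \<longrightarrow> f x \<noteq> f y"
    proof (intro allI impI)
      fix x y assume e: "{x, y} \<in> E"
      have xy: "x \<noteq> y" using edge_ne[OF sg e] .
      have "{x,y} \<subseteq> A \<or> {x,y} \<subseteq> B \<or> (\<exists>a\<in>A. \<exists>b\<in>B. {x,y} = {a, b})" using bspec[OF eE e] .
      thus "f x \<noteq> f y"
      proof (elim disjE bexE)
        assume "{x,y} \<subseteq> A" thus ?thesis using H xy unfolding inj_on_def by auto
      next
        assume "{x,y} \<subseteq> B" thus ?thesis using H xy unfolding inj_on_def by auto
      next
        fix a b assume ab: "a \<in> A" "b \<in> B" "{x, y} = {a, b}"
        hence "(x = a \<and> y = b) \<or> (x = b \<and> y = a)" by (auto simp: doubleton_eq_iff)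
        thus ?thesis using H ab e by (auto simp: insert_commute)
      qed
    qed
  qed
  note eqv = this
  show ?thesis unfolding num_colourings_def Col_def V by (simp only: eqv)
qed

lemma bic_colours:
  assumes "biclique j k V E A B"
  shows "num_colourings V E n = (\<Sum>M\<in>mt {p \<in> A \<times> B. {fst p, snd p} \<notin> E}. ff (j + k - card M) n)"
proof -
  have "finite V" "A \<inter> B = {}" "V = A \<union> B" "card A = j" "card B = k"
    using assms unfolding biclique_def simple_graph_def by auto
  hence "card (Col A B {p \<in> A \<times> B. {fst p, snd p} \<notin> E} {..<n}) = (\<Sum>M\<in>mt {p \<in> A \<times> B. {fst p, snd p} \<notin> E}. ff (j + k - card M) n)"
    using Col_count[of A B "{p \<in> A \<times> B. {fst p, snd p} \<notin> E}" "{..<n}"] by auto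
  thus ?thesis using bic_col[OF assms, of n] by simp
qed


section \<open>Polynomials\<close>

lemma ff_zero: "n < r \<Longrightarrow> ff r n = 0"
  unfolding ff_def by (rule prod_zero) auto

lemma poly_falling: "poly (falling_poly r) x = (\<Prod>i<r. x - int i)"
  unfolding falling_poly_def by (simp add: poly_prod)

lemma falling_nat: "poly (falling_poly r) (int n) = int (ff r n)"
proof (induction r)
  case 0 thus ?case by (simp add: poly_falling ff_def)
next
  case (Suc r)
  have e1: "poly (falling_poly (Suc r)) (int n) = poly (falling_poly r) (int n) * (int n - int r)"
    by (simp add: poly_falling)
  have e2: "ff (Suc r) n = ff r n * (n - r)" by (simp add: ff_def)
  show ?case
  proof (cases "r \<le> n")
    case True thus ?thesis using e1 e2 Suc by (simp add: of_nat_diff)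
  next
    case False thus ?thesis using e1 e2 Suc by (simp add: ff_zero)
  qed
qed

definition fsh :: "nat \<Rightarrow> nat \<Rightarrow> int poly" where
  "fsh k r = (\<Prod>i<r. [:-(int k + int i), 1:])"

lemma falling_add: "falling_poly (k + r) = falling_poly k * fsh k r"
proof (induction r)
  case 0 thus ?case by (simp add: fsh_def)
next
  case (Suc r)
  have "falling_poly (k + Suc r) = falling_poly (k + r) * [:- int (k + r), 1:]"
    by (simp add: falling_poly_def)
  also have "\<dots> = falling_poly k * fsh k r * [:- int (k + r), 1:]"
    by (simp only: Suc)
  also have "\<dots> = falling_poly k * fsh k (Suc r)"
    by (simp only: fsh_def prod.lessThan_Suc mult.assoc of_nat_add minus_add)
  finally show ?case .
qed

lemma falling_nz: "falling_poly k \<noteq> 0"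
  unfolding falling_poly_def by (subst prod_zero_iff) auto

lemma poly_eq_on_nat:
  fixes p q :: "int poly"
  assumes "\<And>n::nat. poly p (int n) = poly q (int n)"
  shows "p = q"
proof (rule ccontr)
  assume "p \<noteq> q"
  hence "p - q \<noteq> 0" by simp
  hence fin: "finite {x. poly (p - q) x = 0}" by (rule poly_roots_finite)
  have "range int \<subseteq> {x. poly (p - q) x = 0}" using assms by auto
  hence "finite (range int)" using fin by (rule finite_subset)
  moreover have "infinite (range int)"
    using finite_imageD[of int "UNIV :: nat set"] by (auto simp: inj_on_def)
  ultimately show False by simp
qed

lemma chrom_eq:
  assumes "biclique j k V E A B"
  shows "chrom_poly V E = (\<Sum>M\<in>mt {p \<in> A \<times> B. {fst p, snd p} \<notin> E}. falling_poly (j + k - card M))"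
    (is "_ = ?P")
proof -
  have P: "poly ?P (int n) = int (num_colourings V E n)" for n
    by (simp add: bic_colours[OF assms] poly_sum falling_nat)
  show ?thesis unfolding chrom_poly_def
  proof (rule the_equality)
    show "\<forall>n. poly ?P (int n) = int (num_colourings V E n)" using P by blast
    fix p assume "\<forall>n. poly p (int n) = int (num_colourings V E n)"
    thus "p = ?P" using P by (intro poly_eq_on_nat) auto
  qed
qed

lemma chrom_factor:
  assumes "biclique j k V E A B"
  shows "chrom_poly V E = falling_poly k * interesting_factor k V E"
proof -
  let ?Y = "{p \<in> A \<times> B. {fst p, snd p} \<notin> E}"
  have fA: "finite A" and cA: "card A = j"
    using bicliqueD[OF assms] unfolding simple_graph_def by auto
  have "chrom_poly V E = (\<Sum>M\<in>mt ?Y. falling_poly (k + (j - card M)))"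
  proof -
    have "(\<Sum>M\<in>mt ?Y. falling_poly (j + k - card M)) = (\<Sum>M\<in>mt ?Y. falling_poly (k + (j - card M)))"
    proof (rule sum.cong[OF refl])
      fix M assume "M \<in> mt ?Y"
      hence "card M \<le> j" using mt_card_le[of M ?Y A B] fA cA by auto
      thus "falling_poly (j + k - card M) = falling_poly (k + (j - card M))" by (simp add: add.commute)
    qed
    thus ?thesis by (simp add: chrom_eq[OF assms])
  qed
  also have "\<dots> = falling_poly k * (\<Sum>M\<in>mt ?Y. fsh k (j - card M))"
    by (simp add: falling_add sum_distrib_left)
  finally have eq: "chrom_poly V E = falling_poly k * (\<Sum>M\<in>mt ?Y. fsh k (j - card M))" .
  hence "interesting_factor k V E = (\<Sum>M\<in>mt ?Y. fsh k (j - card M))"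
    unfolding interesting_factor_def using falling_nz by simp
  thus ?thesis using eq by simp
qed

lemma poly_falling_gch: "real_of_int (poly (falling_poly k) (a::int)) = fact k * (real_of_int a gchoose k)"
  by (simp add: gbinomial_mult_fact poly_falling lessThan_atLeast0)

lemma part1:
  assumes G: "biclique j k VG EG AG BG" and H: "biclique j k VH EH AH BH"
    and g: "interesting_factor k VG EG =
              smult ((-1) ^ j) (pcompose (interesting_factor k VH EH) [:c, -1:])"
  shows "poly (chrom_poly VG EG) (c + 1) =
                 ((c + 1) gchoose k) * (-1) ^ (j + k) * poly (chrom_poly VH EH) (-1)"
proof -
  define h where "h = poly (interesting_factor k VH EH) (-1)"
  have "poly (chrom_poly VG EG) (c + 1) = poly (falling_poly k) (c+1) * ((-1)^j * h)"
    by (simp add: chrom_factor[OF G] g poly_pcompose h_def)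
  hence 1: "real_of_int (poly (chrom_poly VG EG) (c + 1)) = fact k * (real_of_int (c+1) gchoose k) * ((-1)^j * h)"
    by (simp add: poly_falling_gch)
  have "poly (chrom_poly VH EH) (-1) = poly (falling_poly k) (-1) * h"
    by (simp add: chrom_factor[OF H] h_def)
  have 2: "real_of_int (poly (chrom_poly VH EH) (-1)) = fact k * (-1)^k * h"
    if "poly (chrom_poly VH EH) (-1) = poly (falling_poly k) (-1) * h"
  proof -
    have "gbinomial (-1::real) k = (-1)^k" using of_int_gbinomial[of "-1" k, where 'a=real] by simp
    thus ?thesis using that poly_falling_gch[of k "-1"] by simp
  qed
  have 3: "((-1::real)^k) * (-1)^k = 1"
    by (simp add: power_mult_distrib[symmetric])
  have 4: "(-1::real)^(j+k)*(-1)^k = (-1)^j"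
    by (simp add: power_add mult.assoc 3)
  show ?thesis using 1 2[OF \<open>poly (chrom_poly VH EH) (-1) = poly (falling_poly k) (-1) * h\<close>] 4 by simp
qed



definition src :: "('a \<times> 'a) set \<Rightarrow> 'a \<Rightarrow> bool" where
  "src R v \<longleftrightarrow> (\<forall>u. (u, v) \<notin> R)"

definition Edel :: "'a set set \<Rightarrow> 'a \<Rightarrow> 'a set set" where
  "Edel E v = {e \<in> E. v \<notin> e}"

definition pe :: "'a set set \<Rightarrow> bool" where
  "pe E \<longleftrightarrow> (\<forall>e\<in>E. \<exists>x y. e = {x, y} \<and> x \<noteq> y)"

lemma pe_ne: "pe E \<Longrightarrow> {x, y} \<in> E \<Longrightarrow> x \<noteq> y"
  unfolding pe_def by (metis doubleton_eq_iff)

lemma pe_Edel: "pe E \<Longrightarrow> pe (Edel E v)"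
  unfolding pe_def Edel_def by blast

lemma acyclic_src:
  assumes s: "\<forall>u. (u, v) \<notin> R" and a: "acyclic {p \<in> R. fst p \<noteq> v}"
  shows "acyclic R"
proof -
  let ?R0 = "{p \<in> R. fst p \<noteq> v}"
  have key: "x = v \<or> (x, y) \<in> ?R0\<^sup>+" if "(x, y) \<in> R\<^sup>+" for x y
    using that
  proof (induction rule: trancl_induct)
    case (base y)
    thus ?case by auto
  next
    case (step y z)
    show ?case
    proof (cases "x = v")
      case True thus ?thesis by simp
    next
      case False
      with step.IH have xy: "(x, y) \<in> ?R0\<^sup>+" by simp
      then obtain w where "(w, y) \<in> ?R0" using tranclD2 by metis
      hence "y \<noteq> v" using s by auto
      hence "(y, z) \<in> ?R0" using step.hyps(2) by simp
      thus ?thesis using xy by (meson trancl_into_trancl)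
    qed
  qed
  show ?thesis unfolding acyclic_def
  proof
    fix x show "(x, x) \<notin> R\<^sup>+"
    proof
      assume xx: "(x, x) \<in> R\<^sup>+"
      show False
      proof (cases "x = v")
        case True
        then obtain w where "(w, v) \<in> R" using xx tranclD2 by metis
        thus False using s by auto
      next
        case False
        hence "(x, x) \<in> ?R0\<^sup>+" using key[OF xx] by simp
        thus False using a unfolding acyclic_def by blast
      qed
    qed
  qed
qed

lemma src_remove:
  assumes pe: "pe E" and vW: "v \<notin> W" "\<forall>w\<in>W. {v, w} \<notin> E"
  shows "card {R. (orientation E R \<and> acyclic R) \<and> src R v \<and> (\<forall>w\<in>W. src R w)}
       = card {R. (orientation (Edel E v) R \<and> acyclic R) \<and> (\<forall>w\<in>W. src R w)}"
proof -
  let ?L = "{R. (orientation E R \<and> acyclic R) \<and> src R v \<and> (\<forall>w\<in>W. src R w)}"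
  let ?Rt = "{R. (orientation (Edel E v) R \<and> acyclic R) \<and> (\<forall>w\<in>W. src R w)}"
  let ?f = "\<lambda>R. {p \<in> R. fst p \<noteq> v}"
  let ?g = "\<lambda>R. R \<union> {(v, u) | u. {v, u} \<in> E}"
  have "bij_betw ?f ?L ?Rt"
  proof (rule bij_betw_byWitness[where f' = ?g])
    show "\<forall>R\<in>?L. ?g (?f R) = R"
    proof
      fix R assume R: "R \<in> ?L"
      hence o: "R \<subseteq> {(x, y). {x, y} \<in> E}" "\<forall>x y. {x, y} \<in> E \<longrightarrow> ((x, y) \<in> R \<longleftrightarrow> (y, x) \<notin> R)"
        and sv: "\<forall>u. (u, v) \<notin> R"
        by (auto simp: orientation_def src_def)
      show "?g (?f R) = R"
      proof (intro equalityI subsetI)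
        fix p assume "p \<in> ?g (?f R)"
        then consider "p \<in> R" | u where "p = (v, u)" "{v, u} \<in> E" by blast
        thus "p \<in> R"
        proof cases
          case 2 thus ?thesis using o(2) sv by blast
        qed simp
      next
        fix p assume p: "p \<in> R"
        obtain x y where xy: "p = (x, y)" by (cases p)
        show "p \<in> ?g (?f R)"
        proof (cases "x = v")
          case True
          hence "{v, y} \<in> E" using o(1) p xy by auto
          thus ?thesis using True xy by blast
        next
          case False thus ?thesis using p xy by auto
        qed
      qed
    qed
    show "\<forall>R\<in>?Rt. ?f (?g R) = R"
    proof
      fix R assume R: "R \<in> ?Rt"
      hence o: "R \<subseteq> {(x, y). {x, y} \<in> Edel E v}" by (auto simp: orientation_def)
      have "\<forall>p\<in>R. fst p \<noteq> v" using o unfolding Edel_def by auto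
      thus "?f (?g R) = R" by auto
    qed
    show "?f ` ?L \<subseteq> ?Rt"
    proof
      fix R' assume "R' \<in> ?f ` ?L"
      then obtain R where R: "R \<in> ?L" and R': "R' = ?f R" by blast
      hence o: "R \<subseteq> {(x, y). {x, y} \<in> E}" "\<forall>x y. {x, y} \<in> E \<longrightarrow> ((x, y) \<in> R \<longleftrightarrow> (y, x) \<notin> R)"
        and sv: "\<forall>u. (u, v) \<notin> R" and ac: "acyclic R" and sw: "\<forall>w\<in>W. src R w"
        by (auto simp: orientation_def src_def)
      have o1: "R' \<subseteq> {(x, y). {x, y} \<in> Edel E v}"
      proof
        fix p assume p: "p \<in> R'"
        obtain x y where xy: "p = (x, y)" by (cases p)
        have "x \<noteq> v" "(x, y) \<in> R" using p xy R' by auto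
        moreover have "y \<noteq> v" using sv \<open>(x, y) \<in> R\<close> by auto
        ultimately show "p \<in> {(x, y). {x, y} \<in> Edel E v}" using o(1) xy by (auto simp: Edel_def)
      qed
      have o2: "\<forall>x y. {x, y} \<in> Edel E v \<longrightarrow> ((x, y) \<in> R' \<longleftrightarrow> (y, x) \<notin> R')"
      proof (intro allI impI)
        fix x y assume "{x, y} \<in> Edel E v"
        hence "{x, y} \<in> E" "x \<noteq> v" "y \<noteq> v" by (auto simp: Edel_def)
        thus "(x, y) \<in> R' \<longleftrightarrow> (y, x) \<notin> R'" using o(2) R' by auto
      qed
      have "acyclic R'" using ac R' by (auto intro: acyclic_subset)
      moreover have "\<forall>w\<in>W. src R' w" using sw R' by (auto simp: src_def)
      ultimately show "R' \<in> ?Rt" using o1 o2 by (simp add: orientation_def)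
    qed
    show "?g ` ?Rt \<subseteq> ?L"
    proof
      fix R' assume "R' \<in> ?g ` ?Rt"
      then obtain R where R: "R \<in> ?Rt" and R': "R' = ?g R" by blast
      hence o: "R \<subseteq> {(x, y). {x, y} \<in> Edel E v}"
          "\<forall>x y. {x, y} \<in> Edel E v \<longrightarrow> ((x, y) \<in> R \<longleftrightarrow> (y, x) \<notin> R)"
        and ac: "acyclic R" and sw: "\<forall>w\<in>W. src R w"
        by (auto simp: orientation_def)
      have Rv: "fst p \<noteq> v \<and> snd p \<noteq> v" if "p \<in> R" for p
        using o(1) that unfolding Edel_def by auto
      have o1: "R' \<subseteq> {(x, y). {x, y} \<in> E}"
        using o(1) R' unfolding Edel_def by auto
      have o2: "(x, y) \<in> R' \<longleftrightarrow> (y, x) \<notin> R'" if e: "{x, y} \<in> E" for x y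
      proof -
        have xy: "x \<noteq> y" using pe_ne[OF pe e] .
        show ?thesis
        proof (cases "x = v \<or> y = v")
          case True
          thus ?thesis
          proof
            assume xv: "x = v"
            have "(x, y) \<in> R'" using R' e xv by blast
            moreover have "(y, x) \<notin> R'" using R' Rv xv xy by (auto dest!: Rv)
            ultimately show ?thesis by simp
          next
            assume yv: "y = v"
            have "(y, x) \<in> R'" using R' e yv by (auto simp: insert_commute)
            moreover have "(x, y) \<notin> R'" using R' Rv yv xy by (auto dest!: Rv)
            ultimately show ?thesis by simp
          qed
        next
          case False
          hence "{x, y} \<in> Edel E v" using e by (auto simp: Edel_def)
          thus ?thesis using o(2) R' False by auto
        qed
      qed
      have sv: "\<forall>u. (u, v) \<notin> R'"
      proof (intro allI notI)
        fix u assume "(u, v) \<in> R'"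
        then consider "(u, v) \<in> R" | "u = v" "{v, v} \<in> E" using R' by blast
        thus False
        proof cases
          case 1 thus False using Rv by fastforce
        next
          case 2 thus False using pe_ne[OF pe] by blast
        qed
      qed
      have f: "{p \<in> R'. fst p \<noteq> v} = R" using R' Rv by auto
      have "acyclic R'" using acyclic_src[OF sv] ac f by simp
      moreover have "\<forall>w\<in>W. src R' w"
        using sw vW R' unfolding src_def by auto
      ultimately show "R' \<in> ?L" using o1 o2 sv by (simp add: orientation_def src_def)
    qed
  qed
  thus ?thesis by (rule bij_betw_same_card)
qed


definition aos :: "'a set set \<Rightarrow> ('a \<times> 'a) set set" where
  "aos E = {R. orientation E R \<and> acyclic R}"

lemma aos_sub:
  assumes "simple_graph V E" "R \<in> aos E"
  shows "R \<subseteq> V \<times> V"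
  using assms unfolding aos_def orientation_def simple_graph_def by blast

lemma aos_finite:
  assumes "simple_graph V E"
  shows "finite (aos E)"
proof -
  have "aos E \<subseteq> Pow (V \<times> V)" using aos_sub[OF assms] by blast
  moreover have "finite V" using assms by (simp add: simple_graph_def)
  ultimately show ?thesis by (meson finite_Pow_iff finite_SigmaI finite_subset)
qed

lemma src_count:
  assumes bq: "biclique j k V E A B" and ne: "V \<noteq> {}" and R: "R \<in> aos E"
  shows "card {v \<in> V. src R v} = 1 + card {p \<in> {p \<in> A \<times> B. {fst p, snd p} \<notin> E}. src R (fst p) \<and> src R (snd p)}"
proof -
  note D = bicliqueD[OF bq]
  have finV: "finite V" using D(1) by (simp add: simple_graph_def)
  have finA: "finite A" "finite B" using finV D(3) by auto
  have o: "\<forall>x y. {x, y} \<in> E \<longrightarrow> ((x, y) \<in> R \<longleftrightarrow> (y, x) \<notin> R)" and ac: "acyclic R"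
    using R by (auto simp: aos_def orientation_def)
  define SA where "SA = {a \<in> A. src R a}"
  define SB where "SB = {b \<in> B. src R b}"
  have S: "{v \<in> V. src R v} = SA \<union> SB" using D(3) by (auto simp: SA_def SB_def)
  have dis: "SA \<inter> SB = {}" using D(2) by (auto simp: SA_def SB_def)
  have finS: "finite SA" "finite SB" using finA by (auto simp: SA_def SB_def)
  have cS: "card {v \<in> V. src R v} = card SA + card SB"
    using S dis finS by (simp add: card_Un_disjoint)
  have two: "x = y" if "x \<in> V" "y \<in> V" "src R x" "src R y" "{x, y} \<in> E" for x y
  proof -
    have "(x, y) \<in> R \<or> (y, x) \<in> R" using o that(5) by blast
    thus ?thesis using that(3,4) by (auto simp: src_def)
  qed
  have cA: "card SA \<le> 1"
  proof -
    have "\<forall>a1\<in>SA. \<forall>a2\<in>SA. a1 = a2"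
    proof (intro ballI)
      fix a1 a2 assume a: "a1 \<in> SA" "a2 \<in> SA"
      show "a1 = a2"
      proof (rule ccontr)
        assume "a1 \<noteq> a2"
        hence "{a1, a2} \<in> E" using D(6) a by (auto simp: SA_def)
        thus False using two[of a1 a2] a D(3) \<open>a1 \<noteq> a2\<close> by (auto simp: SA_def)
      qed
    qed
    thus ?thesis using card_le_Suc0_iff_eq[OF finS(1)] by simp
  qed
  have cB: "card SB \<le> 1"
  proof -
    have "\<forall>a1\<in>SB. \<forall>a2\<in>SB. a1 = a2"
    proof (intro ballI)
      fix a1 a2 assume a: "a1 \<in> SB" "a2 \<in> SB"
      show "a1 = a2"
      proof (rule ccontr)
        assume "a1 \<noteq> a2"
        hence "{a1, a2} \<in> E" using D(7) a by (auto simp: SB_def)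
        thus False using two[of a1 a2] a D(3) \<open>a1 \<noteq> a2\<close> by (auto simp: SB_def)
      qed
    qed
    thus ?thesis using card_le_Suc0_iff_eq[OF finS(2)] by simp
  qed
  have X: "{p \<in> {p \<in> A \<times> B. {fst p, snd p} \<notin> E}. src R (fst p) \<and> src R (snd p)} = SA \<times> SB"
  proof (intro equalityI subsetI)
    fix p assume "p \<in> {p \<in> {p \<in> A \<times> B. {fst p, snd p} \<notin> E}. src R (fst p) \<and> src R (snd p)}"
    thus "p \<in> SA \<times> SB" by (auto simp: SA_def SB_def)
  next
    fix p assume p: "p \<in> SA \<times> SB"
    obtain a b where ab: "p = (a, b)" by (cases p)
    have ab2: "a \<in> A" "b \<in> B" "src R a" "src R b" using p ab by (auto simp: SA_def SB_def)
    have "a \<noteq> b" using ab2 D(2) by auto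
    hence "{a, b} \<notin> E" using two[of a b] ab2 D(3) by auto
    thus "p \<in> {p \<in> {p \<in> A \<times> B. {fst p, snd p} \<notin> E}. src R (fst p) \<and> src R (snd p)}"
      using ab ab2 by auto
  qed
  have "R \<subseteq> V \<times> V" using aos_sub[OF D(1) R] .
  hence finR: "finite R" using finV by (meson finite_SigmaI finite_subset)
  have wf: "wf R" using finite_acyclic_wf[OF finR ac] .
  obtain x where x: "x \<in> V" using ne by blast
  obtain z where z: "z \<in> V" "\<And>y. (y, z) \<in> R \<Longrightarrow> y \<notin> V" using wfE_min[OF wf x] by blast
  have "src R z" unfolding src_def
  proof (intro allI notI)
    fix u assume "(u, z) \<in> R"
    moreover hence "u \<in> V" using \<open>R \<subseteq> V \<times> V\<close> by blast
    ultimately show False using z(2) by blast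
  qed
  hence "z \<in> SA \<union> SB" using S z(1) by blast
  hence "card SA + card SB \<ge> 1" using finS by (auto simp: card_gt_0_iff Suc_le_eq)
  hence "card SA + card SB = 1 + card SA * card SB" using cA cB
    by (cases "card SA"; cases "card SB") auto
  thus ?thesis using cS X by (simp add: card_cartesian_product)
qed

lemma card_filter_sum: "finite S \<Longrightarrow> card {x \<in> S. P x} = (\<Sum>x\<in>S. if P x then 1 else 0)"
  by (simp add: sum.If_cases Int_def)

lemma AO_rec:
  assumes bq: "biclique j k V E A B" and ne: "V \<noteq> {}"
  shows "card (aos E) + (\<Sum>p\<in>{p \<in> A \<times> B. {fst p, snd p} \<notin> E}. card {R \<in> aos E. src R (fst p) \<and> src R (snd p)})
      = (\<Sum>v\<in>V. card {R \<in> aos E. src R v})"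
proof -
  note D = bicliqueD[OF bq]
  let ?X = "{p \<in> A \<times> B. {fst p, snd p} \<notin> E}"
  have finV: "finite V" using D(1) by (simp add: simple_graph_def)
  have finX: "finite ?X" using finV D(3) by auto
  have finO: "finite (aos E)" using aos_finite[OF D(1)] .
  have "(\<Sum>v\<in>V. card {R \<in> aos E. src R v}) = (\<Sum>v\<in>V. \<Sum>R\<in>aos E. if src R v then 1 else 0)"
    using finO by (simp add: card_filter_sum)
  also have "\<dots> = (\<Sum>R\<in>aos E. \<Sum>v\<in>V. if src R v then 1 else 0)" by (rule sum.swap)
  also have "\<dots> = (\<Sum>R\<in>aos E. card {v \<in> V. src R v})" using finV by (simp add: card_filter_sum)
  also have "\<dots> = (\<Sum>R\<in>aos E. 1 + card {p \<in> ?X. src R (fst p) \<and> src R (snd p)})"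
    using src_count[OF bq ne] by simp
  also have "\<dots> = (\<Sum>R\<in>aos E. 1) + (\<Sum>R\<in>aos E. card {p \<in> ?X. src R (fst p) \<and> src R (snd p)})"
    by (rule sum.distrib)
  also have "(\<Sum>R\<in>aos E. card {p \<in> ?X. src R (fst p) \<and> src R (snd p)})
     = (\<Sum>R\<in>aos E. \<Sum>p\<in>?X. if src R (fst p) \<and> src R (snd p) then 1 else 0)"
    by (intro sum.cong refl card_filter_sum[OF finX])
  also have "(\<Sum>R\<in>aos E. \<Sum>p\<in>?X. if src R (fst p) \<and> src R (snd p) then 1 else 0)
      = (\<Sum>p\<in>?X. \<Sum>R\<in>aos E. if src R (fst p) \<and> src R (snd p) then 1 else 0)" by (rule sum.swap)
  also have "\<dots> = (\<Sum>p\<in>?X. card {R \<in> aos E. src R (fst p) \<and> src R (snd p)})"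
    by (intro sum.cong refl card_filter_sum[OF finO, symmetric])
  finally show ?thesis by simp
qed



definition wt :: "nat \<Rightarrow> nat \<Rightarrow> nat \<Rightarrow> real" where
  "wt j k m = fact j * fact k / fact m"

definition TT :: "nat \<Rightarrow> nat \<Rightarrow> ('a \<times> 'b) set \<Rightarrow> real" where
  "TT j k Y = (\<Sum>M\<in>mt Y. wt j k (card M))"

lemma swap_count:
  assumes "finite A" "finite S"
  shows "(\<Sum>a\<in>A. \<Sum>M\<in>{M \<in> S. P a M}. f M) = (\<Sum>M\<in>S. real (card {a \<in> A. P a M}) * f M)"
proof -
  have "(\<Sum>a\<in>A. \<Sum>M\<in>{M \<in> S. P a M}. f M) = (\<Sum>M\<in>S. \<Sum>a\<in>{a \<in> A. P a M}. f M)"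
    using sum.swap_restrict[OF assms, of "\<lambda>a M. f M" P] by simp
  also have "\<dots> = (\<Sum>M\<in>S. real (card {a \<in> A. P a M}) * f M)" by simp
  finally show ?thesis .
qed

lemma mt_restrict: "mt {p \<in> Y. Q p} = {M \<in> mt Y. \<forall>p\<in>M. Q p}"
  unfolding mt_def by auto

lemma mt_card_fst: "M \<in> mt Y \<Longrightarrow> card (fst ` M) = card M"
  unfolding mt_def by (simp add: card_image)

lemma mt_card_snd: "M \<in> mt Y \<Longrightarrow> card (snd ` M) = card M"
  unfolding mt_def by (simp add: card_image)

lemma double_count:
  assumes finY: "finite Y"
  shows "(\<Sum>M\<in>mt Y. real (card {p \<in> Y. fst p \<notin> fst ` M \<and> snd p \<notin> snd ` M}) * g (card M))
       = (\<Sum>M\<in>mt Y. real (card M) * g (card M - 1))"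
proof -
  have finM: "finite M" if "M \<in> mt Y" for M using that finY by (auto simp: mt_def intro: finite_subset)
  let ?P = "SIGMA M:mt Y. {p \<in> Y. fst p \<notin> fst ` M \<and> snd p \<notin> snd ` M}"
  let ?Q = "SIGMA M:mt Y. M"
  have "(\<Sum>M\<in>mt Y. real (card {p \<in> Y. fst p \<notin> fst ` M \<and> snd p \<notin> snd ` M}) * g (card M))
      = (\<Sum>M\<in>mt Y. \<Sum>p\<in>{p \<in> Y. fst p \<notin> fst ` M \<and> snd p \<notin> snd ` M}. g (card M))" by simp
  also have "\<dots> = (\<Sum>(M, p)\<in>?P. g (card M))"
    by (rule sum.Sigma) (use finY mt_finite in auto)
  also have "\<dots> = (\<Sum>(M, p)\<in>?Q. g (card M - 1))"
  proof (rule sum.reindex_bij_witness[where i = "\<lambda>(M, p). (M - {p}, p)" and j = "\<lambda>(M, p). (insert p M, p)"])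
    fix b assume b: "b \<in> ?P"
    obtain M p where Mp: "b = (M, p)" by (cases b)
    have M: "M \<in> mt Y" "p \<in> Y" "fst p \<notin> fst ` M" "snd p \<notin> snd ` M" using b Mp by auto
    have pM: "p \<notin> M" using M by auto
    show "(case (case b of (M, p) \<Rightarrow> (insert p M, p)) of (M, p) \<Rightarrow> (M - {p}, p)) = b"
      using Mp pM by auto
    show "(case b of (M, p) \<Rightarrow> (insert p M, p)) \<in> ?Q"
    proof -
      have "insert p M \<in> mt Y" using M pM by (auto simp: mt_def inj_on_insert)
      thus ?thesis using Mp pM by auto
    qed
    show "(case (case b of (M, p) \<Rightarrow> (insert p M, p)) of (M, p) \<Rightarrow> g (card M - 1)) = (case b of (M, p) \<Rightarrow> g (card M))"
      using Mp pM finM[OF M(1)] by auto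
  next
    fix a assume a: "a \<in> ?Q"
    obtain M p where Mp: "a = (M, p)" by (cases a)
    have M: "M \<in> mt Y" "p \<in> M" using a Mp by auto
    show "(case (case a of (M, p) \<Rightarrow> (M - {p}, p)) of (M, p) \<Rightarrow> (insert p M, p)) = a"
      using M Mp by auto
    show "(case a of (M, p) \<Rightarrow> (M - {p}, p)) \<in> ?P"
    proof -
      have "M - {p} \<in> mt Y" using M by (auto simp: mt_def intro: inj_on_subset)
      moreover have "fst p \<notin> fst ` (M - {p})" "snd p \<notin> snd ` (M - {p})"
        using M unfolding mt_def inj_on_def by auto
      moreover have "p \<in> Y" using M by (auto simp: mt_def)
      ultimately show ?thesis using Mp by auto
    qed
  qed
  also have "\<dots> = (\<Sum>M\<in>mt Y. \<Sum>p\<in>M. g (card M - 1))"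
    by (rule sum.Sigma[symmetric]) (use finY mt_finite finM in auto)
  also have "\<dots> = (\<Sum>M\<in>mt Y. real (card M) * g (card M - 1))" by simp
  finally show ?thesis .
qed


lemma wt_id:
  assumes "m \<le> j" "m \<le> k" "0 < j + k"
  shows "(real j - real m) * wt (j-1) k m + (real k - real m) * wt j (k-1) m
     - (real j - real m) * (real k - real m) * wt (j-1) (k-1) m + real m * wt (j-1) (k-1) (m-1) = wt j k m"
proof (cases "j = 0")
  case True
  hence "m = 0" "k > 0" using assms by auto
  thus ?thesis using True by (simp add: wt_def fact_reduce[of k])
next
  case jn: False
  show ?thesis
  proof (cases "k = 0")
    case True
    hence "m = 0" using assms by auto
    thus ?thesis using True jn by (simp add: wt_def fact_reduce[of j])
  next
    case kn: False
    define J where "J = (fact (j-1) :: real)"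
    define K where "K = (fact (k-1) :: real)"
    have fj: "(fact j :: real) = real j * J" using jn by (simp add: J_def fact_reduce[of j])
    have fk: "(fact k :: real) = real k * K" using kn by (simp add: K_def fact_reduce[of k])
    have JK: "J > 0" "K > 0" by (auto simp: J_def K_def)
    show ?thesis
    proof (cases "m = 0")
      case True
      thus ?thesis unfolding wt_def fj fk J_def[symmetric] K_def[symmetric] by (simp add: algebra_simps)
    next
      case mn: False
      define F where "F = (fact (m-1) :: real)"
      have fm: "(fact m :: real) = real m * F" using mn by (simp add: F_def fact_reduce[of m])
      have F: "F > 0" by (simp add: F_def)
      show ?thesis unfolding wt_def fj fk fm J_def[symmetric] K_def[symmetric] F_def[symmetric]
        using F JK mn by (simp add: field_simps)
    qed
  qed
qed

lemma card_uncov_fst: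
  assumes "M \<in> mt Y" "Y \<subseteq> A \<times> B" "finite A"
  shows "card {a \<in> A. \<forall>p\<in>M. fst p \<noteq> a} = card A - card M"
proof -
  have "{a \<in> A. \<forall>p\<in>M. fst p \<noteq> a} = A - fst ` M" by auto
  moreover have "fst ` M \<subseteq> A" using assms by (auto simp: mt_def)
  ultimately show ?thesis using assms by (simp add: card_Diff_subset mt_card_fst finite_subset)
qed

lemma card_uncov_snd:
  assumes "M \<in> mt Y" "Y \<subseteq> A \<times> B" "finite B"
  shows "card {b \<in> B. \<forall>p\<in>M. snd p \<noteq> b} = card B - card M"
proof -
  have "{b \<in> B. \<forall>p\<in>M. snd p \<noteq> b} = B - snd ` M" by auto
  moreover have "snd ` M \<subseteq> B" using assms by (auto simp: mt_def)
  ultimately show ?thesis using assms by (simp add: card_Diff_subset mt_card_snd finite_subset)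
qed

lemma mt_le:
  assumes "M \<in> mt Y" "Y \<subseteq> A \<times> B" "finite A" "finite B"
  shows "card M \<le> card A" "card M \<le> card B"
proof -
  have "fst ` M \<subseteq> A" "snd ` M \<subseteq> B" using assms by (auto simp: mt_def)
  thus "card M \<le> card A" "card M \<le> card B"
    using assms card_mono mt_card_fst[OF assms(1)] mt_card_snd[OF assms(1)] by metis+
qed

lemma card_uncov_pairs:
  assumes M: "M \<in> mt Y" and Y: "Y \<subseteq> A \<times> B" and fin: "finite A" "finite B"
  shows "real (card {p \<in> A \<times> B - Y. \<forall>q\<in>M. fst q \<noteq> fst p \<and> snd q \<noteq> snd p})
    = (real (card A) - real (card M)) * (real (card B) - real (card M))
      - real (card {p \<in> Y. fst p \<notin> fst ` M \<and> snd p \<notin> snd ` M})"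
proof -
  let ?U = "(A - fst ` M) \<times> (B - snd ` M)"
  let ?W = "{p \<in> Y. fst p \<notin> fst ` M \<and> snd p \<notin> snd ` M}"
  have e: "{p \<in> A \<times> B - Y. \<forall>q\<in>M. fst q \<noteq> fst p \<and> snd q \<noteq> snd p} = ?U - ?W" by (fastforce simp: image_iff)
  have sub: "?W \<subseteq> ?U"
  proof
    fix p assume p: "p \<in> ?W"
    hence "fst p \<in> A" "snd p \<in> B" using Y by auto
    thus "p \<in> ?U" using p by (simp add: mem_Times_iff)
  qed
  have finU: "finite ?U" using fin by auto
  have cU: "card ?U = (card A - card M) * (card B - card M)"
  proof -
    have "fst ` M \<subseteq> A" "snd ` M \<subseteq> B" using M Y by (auto simp: mt_def)
    hence "card (A - fst ` M) = card A - card M" "card (B - snd ` M) = card B - card M"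
      using fin mt_card_fst[OF M] mt_card_snd[OF M] by (auto simp: card_Diff_subset finite_subset)
    thus ?thesis by (simp add: card_cartesian_product)
  qed
  have le: "card M \<le> card A" "card M \<le> card B" using mt_le[OF M Y fin] by auto
  have "real (card (?U - ?W)) = real (card ?U) - real (card ?W)"
    using card_Diff_subset[OF finite_subset[OF sub finU] sub] card_mono[OF finU sub] by simp
  thus ?thesis unfolding e cU using le by (simp add: of_nat_diff)
qed

lemma TT_rec:
  assumes fin: "finite A" "finite B" and Y: "Y \<subseteq> A \<times> B" and ne: "A \<union> B \<noteq> {}"
  shows "TT (card A) (card B) Y =
      (\<Sum>a\<in>A. TT (card A - 1) (card B) {p \<in> Y. fst p \<noteq> a})
    + (\<Sum>b\<in>B. TT (card A) (card B - 1) {p \<in> Y. snd p \<noteq> b})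
    - (\<Sum>p\<in>A \<times> B - Y. TT (card A - 1) (card B - 1) {q \<in> Y. fst q \<noteq> fst p \<and> snd q \<noteq> snd p})"
proof -
  define j where "j = card A"
  define k where "k = card B"
  have finY: "finite Y" using fin Y by (auto intro: finite_subset)
  have finM: "finite (mt Y)" using mt_finite[OF finY] .
  have jk: "0 < j + k" using ne fin by (auto simp: j_def k_def card_gt_0_iff)
  have le: "card M \<le> j" "card M \<le> k" if "M \<in> mt Y" for M
    using mt_le[OF that Y fin] by (auto simp: j_def k_def)
  have T1: "(\<Sum>a\<in>A. TT (j - 1) k {p \<in> Y. fst p \<noteq> a})
      = (\<Sum>M\<in>mt Y. (real j - real (card M)) * wt (j-1) k (card M))"
  proof -
    have "(\<Sum>a\<in>A. TT (j - 1) k {p \<in> Y. fst p \<noteq> a})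
        = (\<Sum>a\<in>A. \<Sum>M\<in>{M \<in> mt Y. \<forall>p\<in>M. fst p \<noteq> a}. wt (j-1) k (card M))"
      by (simp add: TT_def mt_restrict)
    also have "\<dots> = (\<Sum>M\<in>mt Y. real (card {a \<in> A. \<forall>p\<in>M. fst p \<noteq> a}) * wt (j-1) k (card M))"
      by (rule swap_count[OF fin(1) finM])
    also have "\<dots> = (\<Sum>M\<in>mt Y. (real j - real (card M)) * wt (j-1) k (card M))"
      by (rule sum.cong[OF refl]) (use le[unfolded j_def k_def] in \<open>simp add: card_uncov_fst[OF _ Y fin(1)] j_def of_nat_diff\<close>)
    finally show ?thesis .
  qed
  have T2: "(\<Sum>b\<in>B. TT j (k - 1) {p \<in> Y. snd p \<noteq> b})
      = (\<Sum>M\<in>mt Y. (real k - real (card M)) * wt j (k-1) (card M))"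
  proof -
    have "(\<Sum>b\<in>B. TT j (k - 1) {p \<in> Y. snd p \<noteq> b})
        = (\<Sum>b\<in>B. \<Sum>M\<in>{M \<in> mt Y. \<forall>p\<in>M. snd p \<noteq> b}. wt j (k-1) (card M))"
      by (simp add: TT_def mt_restrict)
    also have "\<dots> = (\<Sum>M\<in>mt Y. real (card {b \<in> B. \<forall>p\<in>M. snd p \<noteq> b}) * wt j (k-1) (card M))"
      by (rule swap_count[OF fin(2) finM])
    also have "\<dots> = (\<Sum>M\<in>mt Y. (real k - real (card M)) * wt j (k-1) (card M))"
      by (rule sum.cong[OF refl]) (use le[unfolded j_def k_def] in \<open>simp add: card_uncov_snd[OF _ Y fin(2)] k_def of_nat_diff\<close>)
    finally show ?thesis .
  qed
  have T3: "(\<Sum>p\<in>A \<times> B - Y. TT (j - 1) (k - 1) {q \<in> Y. fst q \<noteq> fst p \<and> snd q \<noteq> snd p})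
      = (\<Sum>M\<in>mt Y. (real j - real (card M)) * (real k - real (card M)) * wt (j-1) (k-1) (card M))
      - (\<Sum>M\<in>mt Y. real (card M) * wt (j-1) (k-1) (card M - 1))"
  proof -
    have finX: "finite (A \<times> B - Y)" using fin by auto
    have "(\<Sum>p\<in>A \<times> B - Y. TT (j - 1) (k - 1) {q \<in> Y. fst q \<noteq> fst p \<and> snd q \<noteq> snd p})
      = (\<Sum>p\<in>A \<times> B - Y. \<Sum>M\<in>{M \<in> mt Y. \<forall>q\<in>M. fst q \<noteq> fst p \<and> snd q \<noteq> snd p}. wt (j-1) (k-1) (card M))"
      by (simp add: TT_def mt_restrict)
    also have "\<dots> = (\<Sum>M\<in>mt Y. real (card {p \<in> A \<times> B - Y. \<forall>q\<in>M. fst q \<noteq> fst p \<and> snd q \<noteq> snd p}) * wt (j-1) (k-1) (card M))"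
      by (rule swap_count[OF finX finM])
    also have "\<dots> = (\<Sum>M\<in>mt Y. (real j - real (card M)) * (real k - real (card M)) * wt (j-1) (k-1) (card M)
         - real (card {p \<in> Y. fst p \<notin> fst ` M \<and> snd p \<notin> snd ` M}) * wt (j-1) (k-1) (card M))"
    proof (rule sum.cong[OF refl])
      fix M assume M: "M \<in> mt Y"
      show "real (card {p \<in> A \<times> B - Y. \<forall>q\<in>M. fst q \<noteq> fst p \<and> snd q \<noteq> snd p}) * wt (j-1) (k-1) (card M)
        = (real j - real (card M)) * (real k - real (card M)) * wt (j-1) (k-1) (card M)
         - real (card {p \<in> Y. fst p \<notin> fst ` M \<and> snd p \<notin> snd ` M}) * wt (j-1) (k-1) (card M)"
        unfolding card_uncov_pairs[OF M Y fin] j_def k_def by (simp add: left_diff_distrib)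
    qed
    also have "\<dots> = (\<Sum>M\<in>mt Y. (real j - real (card M)) * (real k - real (card M)) * wt (j-1) (k-1) (card M))
      - (\<Sum>M\<in>mt Y. real (card {p \<in> Y. fst p \<notin> fst ` M \<and> snd p \<notin> snd ` M}) * wt (j-1) (k-1) (card M))"
      by (rule sum_subtractf)
    also have "(\<Sum>M\<in>mt Y. real (card {p \<in> Y. fst p \<notin> fst ` M \<and> snd p \<notin> snd ` M}) * wt (j-1) (k-1) (card M))
       = (\<Sum>M\<in>mt Y. real (card M) * wt (j-1) (k-1) (card M - 1))"
      by (rule double_count[OF finY])
    finally show ?thesis .
  qed
  have "TT j k Y = (\<Sum>M\<in>mt Y. (real j - real (card M)) * wt (j-1) k (card M) + (real k - real (card M)) * wt j (k-1) (card M)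
     - (real j - real (card M)) * (real k - real (card M)) * wt (j-1) (k-1) (card M) + real (card M) * wt (j-1) (k-1) (card M - 1))"
    unfolding TT_def
  proof (rule sum.cong[OF refl])
    fix M assume M: "M \<in> mt Y"
    show "wt j k (card M) = (real j - real (card M)) * wt (j-1) k (card M) + (real k - real (card M)) * wt j (k-1) (card M)
     - (real j - real (card M)) * (real k - real (card M)) * wt (j-1) (k-1) (card M) + real (card M) * wt (j-1) (k-1) (card M - 1)"
      by (rule wt_id[OF le[OF M] jk, symmetric])
  qed
  also have "\<dots> = (\<Sum>a\<in>A. TT (j - 1) k {p \<in> Y. fst p \<noteq> a}) + (\<Sum>b\<in>B. TT j (k - 1) {p \<in> Y. snd p \<noteq> b})
     - (\<Sum>p\<in>A \<times> B - Y. TT (j - 1) (k - 1) {q \<in> Y. fst q \<noteq> fst p \<and> snd q \<noteq> snd p})"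
    unfolding T1 T2 T3 by (simp add: sum.distrib sum_subtractf)
  finally show ?thesis by (simp add: j_def k_def)
qed



section \<open>Acyclic orientations of bicliques\<close>

lemma pe_sg: "simple_graph V E \<Longrightarrow> pe E"
  unfolding simple_graph_def pe_def by (metis card_2_iff)

lemma biclique_del:
  assumes bq: "biclique j k V E A B"
  shows "biclique (card (A - {v})) (card (B - {v})) (V - {v}) (Edel E v) (A - {v}) (B - {v})"
proof -
  note D = bicliqueD[OF bq]
  have sg: "simple_graph (V - {v}) (Edel E v)"
    using D(1) unfolding simple_graph_def Edel_def by auto
  have c1: "\<forall>x\<in>A - {v}. \<forall>y\<in>A - {v}. x \<noteq> y \<longrightarrow> {x, y} \<in> Edel E v"
    using D(6) by (auto simp: Edel_def)
  have c2: "\<forall>x\<in>B - {v}. \<forall>y\<in>B - {v}. x \<noteq> y \<longrightarrow> {x, y} \<in> Edel E v"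
    using D(7) by (auto simp: Edel_def)
  have c3: "\<forall>e\<in>Edel E v. e \<subseteq> A - {v} \<or> e \<subseteq> B - {v} \<or> (\<exists>x\<in>A - {v}. \<exists>y\<in>B - {v}. e = {x, y})"
  proof
    fix e assume e: "e \<in> Edel E v"
    hence eE: "e \<in> E" and ve: "v \<notin> e" by (auto simp: Edel_def)
    from bspec[OF D(8) eE] show "e \<subseteq> A - {v} \<or> e \<subseteq> B - {v} \<or> (\<exists>x\<in>A - {v}. \<exists>y\<in>B - {v}. e = {x, y})"
    proof (elim disjE bexE)
      assume "e \<subseteq> A" thus ?thesis using ve by blast
    next
      assume "e \<subseteq> B" thus ?thesis using ve by blast
    next
      fix x y assume "x \<in> A" "y \<in> B" "e = {x, y}"
      hence "x \<in> A - {v}" "y \<in> B - {v}" using ve by auto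
      thus ?thesis using \<open>e = {x, y}\<close> by blast
    qed
  qed
  have dis: "(A - {v}) \<inter> (B - {v}) = {}" using D(2) by blast
  have Veq: "V - {v} = (A - {v}) \<union> (B - {v})" using D(3) by blast
  show ?thesis unfolding biclique_def
    by (intro conjI sg c1 c2 c3 refl dis Veq)
qed

lemma N1:
  assumes bq: "biclique j k V E A B"
  shows "card {R \<in> aos E. src R v} = card (aos (Edel E v))"
proof -
  have pe: "pe E" using pe_sg bicliqueD(1)[OF bq] by blast
  have "card {R. (orientation E R \<and> acyclic R) \<and> src R v \<and> (\<forall>w\<in>{}. src R w)}
       = card {R. (orientation (Edel E v) R \<and> acyclic R) \<and> (\<forall>w\<in>{}. src R w)}"
    by (rule src_remove[OF pe]) auto
  thus ?thesis by (simp add: aos_def)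
qed

lemma N2:
  assumes bq: "biclique j k V E A B" and ab: "a \<noteq> b" "{a, b} \<notin> E"
  shows "card {R \<in> aos E. src R a \<and> src R b} = card (aos (Edel (Edel E a) b))"
proof -
  have pe: "pe E" using pe_sg bicliqueD(1)[OF bq] by blast
  have "card {R. (orientation E R \<and> acyclic R) \<and> src R a \<and> (\<forall>w\<in>{b}. src R w)}
       = card {R. (orientation (Edel E a) R \<and> acyclic R) \<and> (\<forall>w\<in>{b}. src R w)}"
    by (rule src_remove[OF pe]) (use ab in auto)
  also have "{R. (orientation (Edel E a) R \<and> acyclic R) \<and> (\<forall>w\<in>{b}. src R w)}
     = {R. (orientation (Edel E a) R \<and> acyclic R) \<and> src R b \<and> (\<forall>w\<in>{}. src R w)}" by auto
  also have "card \<dots> = card {R. (orientation (Edel (Edel E a) b) R \<and> acyclic R) \<and> (\<forall>w\<in>{}. src R w)}"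
    by (rule src_remove[OF pe_Edel[OF pe]]) auto
  finally show ?thesis by (simp add: aos_def)
qed

lemma mt_empty: "mt {} = {{}}"
  by (auto simp: mt_def)

lemma AO_thm:
  assumes "biclique j k V E A B"
  shows "real (card (aos E)) = TT (card A) (card B) {p \<in> A \<times> B. {fst p, snd p} \<in> E}"
  using assms
proof (induction "card V" arbitrary: j k V E A B rule: less_induct)
  case less
  note bq = less.prems
  note D = bicliqueD[OF bq]
  have finV: "finite V" using D(1) by (simp add: simple_graph_def)
  have finA: "finite A" "finite B" using finV D(3) by auto
  define Y where "Y = {p \<in> A \<times> B. {fst p, snd p} \<in> E}"
  show ?case
  proof (cases "V = {}")
    case True
    hence AB: "A = {}" "B = {}" using D(3) by auto
    have "E = {}" using D(1) True unfolding simple_graph_def by auto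
    hence "aos E = {{}}" unfolding aos_def orientation_def acyclic_def by auto
    moreover have "{p \<in> A \<times> B. {fst p, snd p} \<in> E} = {}" using AB by simp
    ultimately show ?thesis using AB by (simp add: TT_def wt_def mt_empty)
  next
    case ne: False
    have disj: "A \<inter> B = {}" using D(2) .
    have Ysub: "Y \<subseteq> A \<times> B" by (auto simp: Y_def)
    have X: "{p \<in> A \<times> B. {fst p, snd p} \<notin> E} = A \<times> B - Y" by (auto simp: Y_def)
    have ltV: "card (V - {v}) < card V" if "v \<in> V" for v by (rule card_Diff1_less[OF finV that])
    have IA: "real (card (aos (Edel E a))) = TT (card A - 1) (card B) {p \<in> Y. fst p \<noteq> a}" if a: "a \<in> A" for a
    proof -
      have aV: "a \<in> V" using a D(3) by auto
      have aB: "a \<notin> B" using a disj by auto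
      have "real (card (aos (Edel E a))) = TT (card (A - {a})) (card (B - {a}))
          {p \<in> (A - {a}) \<times> (B - {a}). {fst p, snd p} \<in> Edel E a}"
        by (rule less.hyps[OF ltV[OF aV] biclique_del[OF bq]])
      moreover have "{p \<in> (A - {a}) \<times> (B - {a}). {fst p, snd p} \<in> Edel E a} = {p \<in> Y. fst p \<noteq> a}"
        using aB by (auto simp: Y_def Edel_def)
      ultimately show ?thesis using aB a finA by simp
    qed
    have IB: "real (card (aos (Edel E b))) = TT (card A) (card B - 1) {p \<in> Y. snd p \<noteq> b}" if b: "b \<in> B" for b
    proof -
      have bV: "b \<in> V" using b D(3) by auto
      have bA: "b \<notin> A" using b disj by auto
      have "real (card (aos (Edel E b))) = TT (card (A - {b})) (card (B - {b}))
          {p \<in> (A - {b}) \<times> (B - {b}). {fst p, snd p} \<in> Edel E b}"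
        by (rule less.hyps[OF ltV[OF bV] biclique_del[OF bq]])
      moreover have "{p \<in> (A - {b}) \<times> (B - {b}). {fst p, snd p} \<in> Edel E b} = {p \<in> Y. snd p \<noteq> b}"
        using bA by (auto simp: Y_def Edel_def)
      ultimately show ?thesis using bA b finA by simp
    qed
    have IX: "real (card {R \<in> aos E. src R (fst p) \<and> src R (snd p)})
        = TT (card A - 1) (card B - 1) {q \<in> Y. fst q \<noteq> fst p \<and> snd q \<noteq> snd p}"
      if p: "p \<in> A \<times> B - Y" for p
    proof -
      obtain a b where pab: "p = (a, b)" by (cases p)
      have a: "a \<in> A" and b: "b \<in> B" and nE: "{a, b} \<notin> E" using p pab by (auto simp: Y_def)
      have aV: "a \<in> V" and aB: "a \<notin> B" and bA: "b \<notin> A" and ab: "a \<noteq> b"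
        using a b disj D(3) by auto
      have bq1: "biclique (card (A - {a})) (card (B - {a})) (V - {a}) (Edel E a) (A - {a}) (B - {a})"
        by (rule biclique_del[OF bq])
      have bq2: "biclique (card (A - {a} - {b})) (card (B - {a} - {b})) (V - {a} - {b}) (Edel (Edel E a) b)
          (A - {a} - {b}) (B - {a} - {b})"
        by (rule biclique_del[OF bq1])
      have "card (V - {a} - {b}) \<le> card (V - {a})" by (rule card_mono) (use finV in auto)
      hence "card (V - {a} - {b}) < card V" using ltV[OF aV] by linarith
      hence "real (card (aos (Edel (Edel E a) b))) = TT (card (A - {a} - {b})) (card (B - {a} - {b}))
          {p \<in> (A - {a} - {b}) \<times> (B - {a} - {b}). {fst p, snd p} \<in> Edel (Edel E a) b}"
        by (rule less.hyps[OF _ bq2])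
      moreover have "{p \<in> (A - {a} - {b}) \<times> (B - {a} - {b}). {fst p, snd p} \<in> Edel (Edel E a) b}
          = {q \<in> Y. fst q \<noteq> fst p \<and> snd q \<noteq> snd p}"
        using aB bA pab by (auto simp: Y_def Edel_def)
      moreover have "A - {a} - {b} = A - {a}" "B - {a} - {b} = B - {b}" using aB bA by auto
      ultimately show ?thesis using N2[OF bq ab nE] pab a b finA by simp
    qed
    have rec: "card (aos E) + (\<Sum>p\<in>A \<times> B - Y. card {R \<in> aos E. src R (fst p) \<and> src R (snd p)})
      = (\<Sum>v\<in>V. card {R \<in> aos E. src R v})"
      using AO_rec[OF bq ne] unfolding X .
    hence "real (card (aos E) + (\<Sum>p\<in>A \<times> B - Y. card {R \<in> aos E. src R (fst p) \<and> src R (snd p)}))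
      = real (\<Sum>v\<in>V. card {R \<in> aos E. src R v})" by (rule arg_cong)
    hence "real (card (aos E)) + (\<Sum>p\<in>A \<times> B - Y. real (card {R \<in> aos E. src R (fst p) \<and> src R (snd p)}))
      = (\<Sum>v\<in>V. real (card {R \<in> aos E. src R v}))" by (simp only: of_nat_add of_nat_sum)
    hence "real (card (aos E)) = (\<Sum>v\<in>V. real (card {R \<in> aos E. src R v}))
        - (\<Sum>p\<in>A \<times> B - Y. real (card {R \<in> aos E. src R (fst p) \<and> src R (snd p)}))"
      by linarith
    also have "(\<Sum>v\<in>V. real (card {R \<in> aos E. src R v}))
        = (\<Sum>a\<in>A. real (card (aos (Edel E a)))) + (\<Sum>b\<in>B. real (card (aos (Edel E b))))"
      unfolding D(3) by (simp add: sum.union_disjoint[OF finA disj] N1[OF bq])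
    also have "\<dots> = (\<Sum>a\<in>A. TT (card A - 1) (card B) {p \<in> Y. fst p \<noteq> a})
        + (\<Sum>b\<in>B. TT (card A) (card B - 1) {p \<in> Y. snd p \<noteq> b})"
      using IA IB by simp
    also have "(\<Sum>p\<in>A \<times> B - Y. real (card {R \<in> aos E. src R (fst p) \<and> src R (snd p)}))
        = (\<Sum>p\<in>A \<times> B - Y. TT (card A - 1) (card B - 1) {q \<in> Y. fst q \<noteq> fst p \<and> snd q \<noteq> snd p})"
      using IX by simp
    also have "(\<Sum>a\<in>A. TT (card A - 1) (card B) {p \<in> Y. fst p \<noteq> a})
        + (\<Sum>b\<in>B. TT (card A) (card B - 1) {p \<in> Y. snd p \<noteq> b})
        - (\<Sum>p\<in>A \<times> B - Y. TT (card A - 1) (card B - 1) {q \<in> Y. fst q \<noteq> fst p \<and> snd q \<noteq> snd p})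
        = TT (card A) (card B) Y"
      using TT_rec[OF finA Ysub] ne D(3) by simp
    finally show ?thesis by (simp add: Y_def)
  qed
qed


lemma ff_fact: "r \<le> n \<Longrightarrow> ff r n * fact (n - r) = (fact n :: nat)"
proof (induction r)
  case 0 thus ?case by (simp add: ff_def)
next
  case (Suc r)
  have e: "ff (Suc r) n = ff r n * (n - r)" by (simp add: ff_def)
  have nr: "n - r = Suc (n - Suc r)" using Suc.prems by arith
  have f: "(fact (n - r) :: nat) = (n - r) * fact (n - Suc r)"
    unfolding nr by (simp only: fact_Suc of_nat_id)
  have IH: "ff r n * fact (n - r) = (fact n :: nat)" using Suc by simp
  show ?case unfolding e using IH f by (simp only: mult.assoc)
qed

lemma part2:
  assumes G: "biclique j k V EG A B" and H: "biclique j k V EH A B" and c: "complementary A B EG EH"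
  shows "num_colourings V EG (j + k) = ((j + k) choose k) * num_acyclic_orientations EH"
proof -
  let ?Y = "{p \<in> A \<times> B. {fst p, snd p} \<notin> EG}"
  note D = bicliqueD[OF G]
  have finV: "finite V" using D(1) by (simp add: simple_graph_def)
  have fin: "finite A" "finite B" using finV D(3) by auto
  have Yeq: "{p \<in> A \<times> B. {fst p, snd p} \<in> EH} = ?Y" using c unfolding complementary_def by auto
  have le: "card M \<le> j" "card M \<le> k" if "M \<in> mt ?Y" for M
    using mt_le[OF that _ fin] D(4,5) by auto
  have 1: "real (num_colourings V EG (j+k)) = (\<Sum>M\<in>mt ?Y. fact (j+k) / fact (card M))"
  proof -
    have "real (num_colourings V EG (j+k)) = (\<Sum>M\<in>mt ?Y. real (ff (j + k - card M) (j + k)))"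
      by (simp add: bic_colours[OF G])
    also have "\<dots> = (\<Sum>M\<in>mt ?Y. fact (j+k) / fact (card M))"
    proof (rule sum.cong[OF refl])
      fix M assume M: "M \<in> mt ?Y"
      have "ff (j + k - card M) (j + k) * fact (j + k - (j + k - card M)) = fact (j + k)"
        by (rule ff_fact) simp
      moreover have "j + k - (j + k - card M) = card M" using le[OF M] by simp
      ultimately have nat: "ff (j + k - card M) (j + k) * fact (card M) = fact (j + k)" by simp
      have "real (ff (j + k - card M) (j + k)) * fact (card M) = fact (j + k)"
        using arg_cong[of _ _ real, OF nat] by simp
      thus "real (ff (j + k - card M) (j + k)) = fact (j+k) / fact (card M)"
        by (simp add: field_simps)
    qed
    finally show ?thesis .
  qed
  have 2: "real (num_acyclic_orientations EH) = (\<Sum>M\<in>mt ?Y. fact j * fact k / fact (card M))"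
    using AO_thm[OF H] Yeq D(4,5) by (simp add: num_acyclic_orientations_def aos_def TT_def wt_def)
  have 3: "real ((j + k) choose k) * (fact j * fact k) = fact (j + k)"
  proof -
    have "fact k * fact (j + k - k) * ((j + k) choose k) = fact (j + k)"
      by (rule binomial_fact_lemma) simp
    hence "real (fact k * fact j * ((j + k) choose k)) = real (fact (j + k))" by simp
    thus ?thesis by (simp add: algebra_simps)
  qed
  have "real (((j + k) choose k) * num_acyclic_orientations EH)
      = (\<Sum>M\<in>mt ?Y. real ((j + k) choose k) * (fact j * fact k) / fact (card M))"
    unfolding of_nat_mult 2 by (simp add: sum_distrib_left)
  also have "\<dots> = real (num_colourings V EG (j+k))" unfolding 1 3 ..
  finally show ?thesis by (simp only: of_nat_eq_iff)
qed

theorem mainTheorem6: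
  fixes j k :: nat
  assumes "1 \<le> j" and "j \<le> k"
  shows "(\<forall>(VG::'a set) EG AG BG (VH::'b set) EH AH BH (c::int).
            biclique j k VG EG AG BG \<and> biclique j k VH EH AH BH \<and>
            interesting_factor k VG EG =
              smult ((-1) ^ j) (pcompose (interesting_factor k VH EH) [:c, -1:])
            \<longrightarrow> poly (chrom_poly VG EG) (c + 1) =
                 ((c + 1) gchoose k) * (-1) ^ (j + k) * poly (chrom_poly VH EH) (-1))
       \<and> (\<forall>(V::'c set) A B EG EH.
            biclique j k V EG A B \<and> biclique j k V EH A B \<and> complementary A B EG EH
            \<longrightarrow> num_colourings V EG (j + k) = ((j + k) choose k) * num_acyclic_orientations EH)"
proof (intro conjI allI impI)
  fix VG :: "'a set" and EG AG BG and VH :: "'b set" and EH AH BH and c :: int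
  assume h: "biclique j k VG EG AG BG \<and> biclique j k VH EH AH BH \<and>
            interesting_factor k VG EG =
              smult ((-1) ^ j) (pcompose (interesting_factor k VH EH) [:c, -1:])"
  show "poly (chrom_poly VG EG) (c + 1) =
                 ((c + 1) gchoose k) * (-1) ^ (j + k) * poly (chrom_poly VH EH) (-1)"
  proof -
    note a = conjunct1[OF h] and b = conjunct1[OF conjunct2[OF h]] and g = conjunct2[OF conjunct2[OF h]]
    show ?thesis using part1[OF a b g] by simp
  qed
next
  fix V :: "'c set" and A B EG EH
  assume "biclique j k V EG A B \<and> biclique j k V EH A B \<and> complementary A B EG EH"
  note hh = this
  show "num_colourings V EG (j + k) = ((j + k) choose k) * num_acyclic_orientations EH"
  proof -
    note a = conjunct1[OF hh] and b = conjunct1[OF conjunct2[OF hh]] and cc = conjunct2[OF conjunct2[OF hh]]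
    show ?thesis by (rule part2[OF a b cc])
  qed
qed

end
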